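(* Let $n\ge 8$ be an even integer and let $W_{3,n}$ be the $3$-regular Kn\"odel graph. Then $W_{3,n}$ is $\gamma$-stable if and only if $n\not\equiv 4 \pmod 8$.
   Context: For an even integer $n\ge 2$ and $1\le\Delta\le\lfloor\log_2 n\rfloor$, the Kn\"odel graph $W_{\Delta,n}$ is the $\Delta$-regular bipartite graph on the $n$ vertices $(i,j)$, $i\in\{1,2\}$, $0\le j\le n/2-1$, in which for every $j$ the vertex $(1,j)$ is adjacent to the vertices $(2,(j+2^k-1)\bmod (n/2))$ for $k=0,1,\dots,\Delta-1$ (and there are no other edges); in particular $W_{3,n}$ is defined for even $n\ge 8$. A set $D$ of vertices of a graph $G$ is dominating if every vertex not in $D$ is adjacent to a vertex of $D$; $\gamma(G)$ is the minimum size of a dominating set. A graph $G$ is $\gamma$-stable (domination vertex stable) if $\gamma(G-u)=\gamma(G)$ for every vertex $u$ of $G$, where $G-u$ is the graph obtained by deleting $u$. *)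

theory Defs
  imports Main
begin

text \<open>A (simple, undirected) graph is given by a vertex set V and a symmetric
adjacency relation adj.  Vertex deletion G - u keeps the relation and removes u
from the vertex set.\<close>

definition dominating :: "'a set \<Rightarrow> ('a \<Rightarrow> 'a \<Rightarrow> bool) \<Rightarrow> 'a set \<Rightarrow> bool" where
  "dominating V adj D \<longleftrightarrow> D \<subseteq> V \<and> (\<forall>v \<in> V - D. \<exists>d \<in> D. adj v d)"

definition domination_number :: "'a set \<Rightarrow> ('a \<Rightarrow> 'a \<Rightarrow> bool) \<Rightarrow> nat" where
  "domination_number V adj = (LEAST k. \<exists>D. dominating V adj D \<and> card D = k)"

definition gamma_stable :: "'a set \<Rightarrow> ('a \<Rightarrow> 'a \<Rightarrow> bool) \<Rightarrow> bool" where
  "gamma_stable V adj \<longleftrightarrow>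
     (\<forall>u \<in> V. domination_number (V - {u}) adj = domination_number V adj)"

definition knodel_vertices :: "nat \<Rightarrow> (nat \<times> nat) set" where
  "knodel_vertices n = {1,2} \<times> {0..<n div 2}"

definition knodel_edge :: "nat \<Rightarrow> nat \<Rightarrow> (nat \<times> nat) \<Rightarrow> (nat \<times> nat) \<Rightarrow> bool" where
  "knodel_edge \<Delta> n x y \<longleftrightarrow>
     x \<in> knodel_vertices n \<and> y \<in> knodel_vertices n \<and>
     (\<exists>k < \<Delta>.
        (fst x = 1 \<and> fst y = 2 \<and> snd y = (snd x + 2 ^ k - 1) mod (n div 2)) \<or>
        (fst y = 1 \<and> fst x = 2 \<and> snd x = (snd y + 2 ^ k - 1) mod (n div 2)))"

end

theory Submission
  imports Defs
begin


lemma ex3: "(\<exists>k<(3::nat). P k) \<longleftrightarrow> P 0 \<or> P 1 \<or> P 2"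
proof -
  have k: "\<And>k::nat. k < 3 \<longleftrightarrow> k = 0 \<or> k = 1 \<or> k = 2" by auto
  show ?thesis
  proof
    assume "\<exists>k<3. P k"
    then obtain k where "k < 3" "P k" by blast
    then show "P 0 \<or> P 1 \<or> P 2" using k by auto
  next
    assume "P 0 \<or> P 1 \<or> P 2"
    then show "\<exists>k<3. P k" by (metis k)
  qed
qed

lemma V_iff: "n = 2*m \<Longrightarrow> x \<in> knodel_vertices n \<longleftrightarrow> (fst x = 1 \<or> fst x = 2) \<and> snd x < m"
  by (cases x) (auto simp: knodel_vertices_def)

definition nb :: "nat \<Rightarrow> nat \<Rightarrow> nat \<Rightarrow> bool" where
  "nb m j k \<longleftrightarrow> k = j mod m \<or> k = (j+1) mod m \<or> k = (j+3) mod m"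

lemma edge_iff:
  assumes "n = 2*m"
  shows "knodel_edge 3 n x y \<longleftrightarrow> x \<in> knodel_vertices n \<and> y \<in> knodel_vertices n \<and>
    ((fst x = 1 \<and> fst y = 2 \<and> nb m (snd x) (snd y)) \<or>
     (fst y = 1 \<and> fst x = 2 \<and> nb m (snd y) (snd x)))"
proof -
  have m: "n div 2 = m" using assms by simp
  have p: "\<And>a::nat. a + 2^0 - 1 = a" "\<And>a::nat. a + 2^1 - 1 = a + 1" "\<And>a::nat. a + 2^2 - 1 = a + 3" by simp_all
  show ?thesis unfolding knodel_edge_def ex3 nb_def m p by blast
qed

lemma dom_intro:
  assumes nm: "n = 2*m" and DW: "D \<subseteq> W" and WV: "W \<subseteq> knodel_vertices n"
    and s1: "\<And>x. (1,x) \<in> W \<Longrightarrow> (1,x) \<notin> D \<Longrightarrow> \<exists>k. nb m x k \<and> (2,k) \<in> D"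
    and s2: "\<And>y. (2,y) \<in> W \<Longrightarrow> (2,y) \<notin> D \<Longrightarrow> \<exists>j. nb m j y \<and> (1,j) \<in> D"
  shows "dominating W (knodel_edge 3 n) D"
  unfolding dominating_def
proof (intro conjI ballI)
  show "D \<subseteq> W" by fact
  fix v assume v: "v \<in> W - D"
  obtain i x where vx: "v = (i,x)" by (cases v)
  have vV: "v \<in> knodel_vertices n" using v WV by auto
  hence "i = 1 \<or> i = 2" using V_iff[OF nm] vx by auto
  then show "\<exists>d\<in>D. knodel_edge 3 n v d"
  proof
    assume i: "i = 1"
    obtain k where d: "nb m x k" "(2,k) \<in> D" using s1[of x] v vx i by auto
    have "(2,k) \<in> knodel_vertices n" using d DW WV by auto
    then have "knodel_edge 3 n v (2,k)" using edge_iff[OF nm] vV vx i d by auto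
    then show ?thesis using d by blast
  next
    assume i: "i = 2"
    obtain j where d: "nb m j x" "(1,j) \<in> D" using s2[of x] v vx i by auto
    have "(1,j) \<in> knodel_vertices n" using d DW WV by auto
    then have "knodel_edge 3 n v (1,j)" using edge_iff[OF nm] vV vx i d by auto
    then show ?thesis using d by blast
  qed
qed

lemma card3: "card {a,b,c} \<le> 3"
  by (auto simp: card_insert_if)

lemma inv_mod:
  fixes j m \<delta> k :: nat
  assumes "j < m" "\<delta> \<le> m" "k = (j + \<delta>) mod m"
  shows "j = (k + m - \<delta>) mod m"
proof (cases "j + \<delta> < m")
  case True
  then have "k = j + \<delta>" using assms(3) by simp
  then have "k + m - \<delta> = j + m" by simp
  then show ?thesis using assms by simp
next
  case False
  then have "k = j + \<delta> - m" using assms by (simp add: le_mod_geq)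
  then have "k + m - \<delta> = j" using False by simp
  then show ?thesis using assms by simp
qed


lemma lower:
  assumes nm: "n = 2*m" and m4: "m \<ge> 4" and WV: "W \<subseteq> knodel_vertices n"
    and dom: "dominating W (knodel_edge 3 n) D"
  shows "card {x\<in>W. fst x = 2} \<le> card {x\<in>D. fst x = 2} + 3 * card {x\<in>D. fst x = 1}"
    and "card {x\<in>W. fst x = 1} \<le> card {x\<in>D. fst x = 1} + 3 * card {x\<in>D. fst x = 2}"
    and "card D = card {x\<in>D. fst x = 1} + card {x\<in>D. fst x = 2}"
proof -
  have finV: "finite (knodel_vertices n)" by (simp add: knodel_vertices_def)
  have DW: "D \<subseteq> W" using dom by (simp add: dominating_def)
  have "D \<subseteq> knodel_vertices n" using DW WV by (rule order_trans)
  then have finD: "finite D" using finV by (rule finite_subset)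
  define P where "P = {x\<in>D. fst x = 1}"
  define Q where "Q = {x\<in>D. fst x = 2}"
  have finP: "finite P" "finite Q" using finD by (simp_all add: P_def Q_def)
  define N2 where "N2 = (\<lambda>d::nat\<times>nat. {(2::nat, snd d mod m), (2, (snd d + 1) mod m), (2, (snd d + 3) mod m)})"
  define N1 where "N1 = (\<lambda>d::nat\<times>nat. {(1::nat, (snd d + m) mod m), (1, (snd d + m - 1) mod m), (1, (snd d + m - 3) mod m)})"
  have sub2: "{x\<in>W. fst x = 2} \<subseteq> Q \<union> (\<Union>d\<in>P. N2 d)"
  proof
    fix v assume v: "v \<in> {x\<in>W. fst x = 2}"
    show "v \<in> Q \<union> (\<Union>d\<in>P. N2 d)"
    proof (cases "v \<in> D")
      case True then show ?thesis using v by (simp add: Q_def)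
    next
      case False
      then have "\<exists>d\<in>D. knodel_edge 3 n v d" using dom v unfolding dominating_def by blast
      then obtain d where d: "d \<in> D" "knodel_edge 3 n v d" by blast
      then have "fst d = 1" "nb m (snd d) (snd v)" using edge_iff[OF nm] v by auto
      then have "v \<in> N2 d" using v by (cases v) (auto simp: N2_def nb_def)
      moreover have "d \<in> P" using d \<open>fst d = 1\<close> by (simp add: P_def)
      ultimately show ?thesis by blast
    qed
  qed
  have sub1: "{x\<in>W. fst x = 1} \<subseteq> P \<union> (\<Union>d\<in>Q. N1 d)"
  proof
    fix v assume v: "v \<in> {x\<in>W. fst x = 1}"
    show "v \<in> P \<union> (\<Union>d\<in>Q. N1 d)"
    proof (cases "v \<in> D")
      case True then show ?thesis using v by (simp add: P_def)
    next
      case False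
      then have "\<exists>d\<in>D. knodel_edge 3 n v d" using dom v unfolding dominating_def by blast
      then obtain d where d: "d \<in> D" "knodel_edge 3 n v d" by blast
      then have fd: "fst d = 2" and nbv: "nb m (snd v) (snd d)" and vlt: "snd v < m"
        using edge_iff[OF nm] V_iff[OF nm] v by auto
      have "snd v = (snd d + m - 0) mod m \<or> snd v = (snd d + m - 1) mod m \<or> snd v = (snd d + m - 3) mod m"
        using nbv inv_mod[OF vlt, of 0 "snd d"] inv_mod[OF vlt, of 1 "snd d"] inv_mod[OF vlt, of 3 "snd d"] m4
        unfolding nb_def by auto
      then have "v \<in> N1 d" using v by (cases v) (auto simp: N1_def)
      moreover have "d \<in> Q" using d fd by (simp add: Q_def)
      ultimately show ?thesis by blast
    qed
  qed
  have c2: "card (Q \<union> (\<Union>d\<in>P. N2 d)) \<le> card Q + 3 * card P"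
  proof -
    have "card (Q \<union> (\<Union>d\<in>P. N2 d)) \<le> card Q + card (\<Union>d\<in>P. N2 d)" by (rule card_Un_le)
    also have "card (\<Union>d\<in>P. N2 d) \<le> (\<Sum>d\<in>P. card (N2 d))" using finP by (intro card_UN_le) auto
    also have "\<dots> \<le> card P * 3" using sum_bounded_above[of P "\<lambda>d. card (N2 d)" 3] by (simp add: N2_def card3)
    finally show ?thesis by simp
  qed
  have c1: "card (P \<union> (\<Union>d\<in>Q. N1 d)) \<le> card P + 3 * card Q"
  proof -
    have "card (P \<union> (\<Union>d\<in>Q. N1 d)) \<le> card P + card (\<Union>d\<in>Q. N1 d)" by (rule card_Un_le)
    also have "card (\<Union>d\<in>Q. N1 d) \<le> (\<Sum>d\<in>Q. card (N1 d))" using finP by (intro card_UN_le) auto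
    also have "\<dots> \<le> card Q * 3" using sum_bounded_above[of Q "\<lambda>d. card (N1 d)" 3] by (simp add: N1_def card3)
    finally show ?thesis by simp
  qed
  have fin2: "finite (Q \<union> (\<Union>d\<in>P. N2 d))" "finite (P \<union> (\<Union>d\<in>Q. N1 d))"
    using finP by (auto simp: N1_def N2_def)
  show "card {x\<in>W. fst x = 2} \<le> card {x\<in>D. fst x = 2} + 3 * card {x\<in>D. fst x = 1}"
    using card_mono[OF fin2(1) sub2] c2 by (simp add: P_def Q_def)
  show "card {x\<in>W. fst x = 1} \<le> card {x\<in>D. fst x = 1} + 3 * card {x\<in>D. fst x = 2}"
    using card_mono[OF fin2(2) sub1] c1 by (simp add: P_def Q_def)
  have "D = P \<union> Q" using DW WV V_iff[OF nm] by (auto simp: P_def Q_def)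
  moreover have "P \<inter> Q = {}" by (auto simp: P_def Q_def)
  ultimately show "card D = card {x\<in>D. fst x = 1} + card {x\<in>D. fst x = 2}"
    using card_Un_disjoint[OF finP] by (simp add: P_def Q_def)
qed



lemma nb0: "x < m \<Longrightarrow> nb m x x" by (simp add: nb_def)
lemma nb1: "x + 1 < m \<Longrightarrow> nb m x (x+1)" by (simp add: nb_def)
lemma nb3: "x + 3 < m \<Longrightarrow> nb m x (x+3)" by (simp add: nb_def)
lemma nb3w: "x + 3 = m + c \<Longrightarrow> c < m \<Longrightarrow> nb m x c" by (simp add: nb_def)

definition D0 :: "nat \<Rightarrow> nat \<Rightarrow> (nat \<times> nat) set" where
  "D0 a b = (\<lambda>i. (1, 4*i)) ` {..<a} \<union> (\<lambda>i. (2, 4*i+2)) ` {..<b}"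

lemma inP: "i < a \<Longrightarrow> (1, 4*i) \<in> D0 a b" by (simp add: D0_def)
lemma inQ: "i < b \<Longrightarrow> (2, 4*i+2) \<in> D0 a b" by (simp add: D0_def)
lemma inQ0: "0 < b \<Longrightarrow> (2, 2) \<in> D0 a b" unfolding D0_def by (rule UnI2, rule rev_image_eqI[of 0]) auto
lemma inP_iff: "(1,x) \<in> D0 a b \<longleftrightarrow> (\<exists>i<a. x = 4*i)" by (auto simp: D0_def)
lemma inQ_iff: "(2,x) \<in> D0 a b \<longleftrightarrow> (\<exists>i<b. x = 4*i+2)" by (auto simp: D0_def)
lemma card_D0: "card (D0 a b) \<le> a + b"
proof -
  have "card (D0 a b) \<le> card ((\<lambda>i. (1::nat, 4*i)) ` {..<a}) + card ((\<lambda>i. (2::nat, 4*i+2)) ` {..<b})"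
    unfolding D0_def by (rule card_Un_le)
  also have "\<dots> \<le> a + b" using card_image_le[of "{..<a}" "\<lambda>i. (1::nat, 4*i)"] card_image_le[of "{..<b}" "\<lambda>i. (2::nat, 4*i+2)"]
    by simp
  finally show ?thesis .
qed
lemma fin_D0: "finite (D0 a b)" by (simp add: D0_def)

lemma split4:
  fixes x :: nat
  obtains q where "x = 4*q" | q where "x = 4*q+1" | q where "x = 4*q+2" | q where "x = 4*q+3"
proof -
  have e: "x = 4*(x div 4) + x mod 4" by simp
  have "x mod 4 = 0 \<or> x mod 4 = 1 \<or> x mod 4 = 2 \<or> x mod 4 = 3" by auto
  then show ?thesis
  proof (elim disjE)
    assume "x mod 4 = 0" then show ?thesis using e that(1) by simp
  next
    assume "x mod 4 = 1" then show ?thesis using e that(2) by simp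
  next
    assume "x mod 4 = 2" then show ?thesis using e that(3) by simp
  next
    assume "x mod 4 = 3" then show ?thesis using e that(4) by simp
  qed
qed


lemma cons0:
  assumes nm: "n = 2*m" and mt: "m = 4*t" and t1: "t \<ge> 1"
  shows "dominating (knodel_vertices n) (knodel_edge 3 n) (D0 t t)"
proof (rule dom_intro[OF nm])
  show "D0 t t \<subseteq> knodel_vertices n" using nm mt by (auto simp: D0_def knodel_vertices_def)
  show "knodel_vertices n \<subseteq> knodel_vertices n" by simp
next
  fix x assume xV: "(1,x) \<in> knodel_vertices n" and xD: "(1,x) \<notin> D0 t t"
  have x: "x < m" using xV V_iff[OF nm] by auto
  show "\<exists>k. nb m x k \<and> (2,k) \<in> D0 t t"
  proof (cases x rule: split4)
    case (1 q) then show ?thesis using xD x mt inP[of q t t] by auto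
  next
    case (2 q)
    then have "q < t" using x mt by linarith
    then have "q + 1 \<le> t" by simp
    then have "x + 1 < m" using 2 mt by linarith
    then show ?thesis using 2 \<open>q < t\<close> nb1[of x m] inQ[of q t t] by (intro exI[of _ "x+1"]) auto
  next
    case (3 q) then show ?thesis using x mt nb0[of x m] inQ[of q t t] by (intro exI[of _ "x"]) auto
  next
    case (4 q)
    show ?thesis
    proof (cases "q + 1 < t")
      case True then show ?thesis using 4 x mt nb3[of x m] inQ[of "q+1" t t] by (intro exI[of _ "x+3"]) auto
    next
      case False then show ?thesis using 4 x mt t1 nb3w[of x m 2] inQ0[of t t] by (intro exI[of _ 2]) auto
    qed
  qed
next
  fix y assume yV: "(2,y) \<in> knodel_vertices n" and yD: "(2,y) \<notin> D0 t t"
  have y: "y < m" using yV V_iff[OF nm] by auto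
  show "\<exists>j. nb m j y \<and> (1,j) \<in> D0 t t"
  proof (cases y rule: split4)
    case (1 q) then show ?thesis using y mt nb0[of y m] inP[of q t t] by (intro exI[of _ "y"]) auto
  next
    case (2 q) then show ?thesis using y mt nb1[of "4*q" m] inP[of q t t] by (intro exI[of _ "4*q"]) auto
  next
    case (3 q) then show ?thesis using yD y mt inQ[of q t t] by auto
  next
    case (4 q) then show ?thesis using y mt nb3[of "4*q" m] inP[of q t t] by (intro exI[of _ "4*q"]) auto
  qed
qed


lemma cons3:
  assumes nm: "n = 2*m" and mt: "m = 4*t+3"
  shows "dominating (knodel_vertices n) (knodel_edge 3 n) (D0 (t+1) (t+1))"
proof (rule dom_intro[OF nm])
  show "D0 (t+1) (t+1) \<subseteq> knodel_vertices n" using nm mt by (auto simp: D0_def knodel_vertices_def)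
  show "knodel_vertices n \<subseteq> knodel_vertices n" by simp
next
  fix x assume xV: "(1,x) \<in> knodel_vertices n" and xD: "(1,x) \<notin> D0 (t+1) (t+1)"
  have x: "x < m" using xV V_iff[OF nm] by auto
  show "\<exists>k. nb m x k \<and> (2,k) \<in> D0 (t+1) (t+1)"
  proof (cases x rule: split4)
    case (1 q)
    then have "q < t+1" using x mt by linarith
    then show ?thesis using 1 xD inP[of q "t+1" "t+1"] by auto
  next
    case (2 q)
    then have "q < t+1" using x mt by linarith
    then have "q \<le> t" by simp
    then have "x + 1 < m" using 2 mt by linarith
    then show ?thesis using 2 \<open>q < t+1\<close> nb1[of x m] inQ[of q "t+1" "t+1"] by (intro exI[of _ "x+1"]) auto
  next
    case (3 q)
    then have "q < t+1" using x mt by linarith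
    then show ?thesis using 3 x nb0[of x m] inQ[of q "t+1" "t+1"] by (intro exI[of _ "x"]) auto
  next
    case (4 q)
    then have "q < t" using x mt by linarith
    then have "q + 1 \<le> t" by simp
    then have "x + 3 < m" using 4 mt by linarith
    then show ?thesis using 4 \<open>q < t\<close> nb3[of x m] inQ[of "q+1" "t+1" "t+1"] by (intro exI[of _ "x+3"]) auto
  qed
next
  fix y assume yV: "(2,y) \<in> knodel_vertices n" and yD: "(2,y) \<notin> D0 (t+1) (t+1)"
  have y: "y < m" using yV V_iff[OF nm] by auto
  show "\<exists>j. nb m j y \<and> (1,j) \<in> D0 (t+1) (t+1)"
  proof (cases y rule: split4)
    case (1 q)
    then have "q < t+1" using y mt by linarith
    then show ?thesis using 1 y nb0[of y m] inP[of q "t+1" "t+1"] by (intro exI[of _ "y"]) auto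
  next
    case (2 q)
    then have "q < t+1" using y mt by linarith
    then show ?thesis using 2 y nb1[of "4*q" m] inP[of q "t+1" "t+1"] by (intro exI[of _ "4*q"]) auto
  next
    case (3 q)
    then have "q < t+1" using y mt by linarith
    then show ?thesis using 3 yD inQ[of q "t+1" "t+1"] by auto
  next
    case (4 q)
    then have "q < t+1" using y mt by linarith
    then show ?thesis using 4 y nb3[of "4*q" m] inP[of q "t+1" "t+1"] by (intro exI[of _ "4*q"]) auto
  qed
qed

lemma cons1:
  assumes nm: "n = 2*m" and mt: "m = 4*t+1" and t1: "t \<ge> 1"
  shows "dominating (knodel_vertices n) (knodel_edge 3 n) (insert (2,4*t) (D0 t t))"
proof (rule dom_intro[OF nm])
  show "insert (2,4*t) (D0 t t) \<subseteq> knodel_vertices n" using nm mt by (auto simp: D0_def knodel_vertices_def)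
  show "knodel_vertices n \<subseteq> knodel_vertices n" by simp
next
  fix x assume xV: "(1,x) \<in> knodel_vertices n" and xD: "(1,x) \<notin> insert (2,4*t) (D0 t t)"
  have x: "x < m" using xV V_iff[OF nm] by auto
  have xD': "(1,x) \<notin> D0 t t" using xD by simp
  show "\<exists>k. nb m x k \<and> (2,k) \<in> insert (2,4*t) (D0 t t)"
  proof (cases "x = 4*t")
    case True then show ?thesis using x nb0[of x m] by (intro exI[of _ "x"]) auto
  next
    case False
    then have x4: "x < 4*t" using x mt by linarith
    show ?thesis
    proof (cases x rule: split4)
      case (1 q)
      then have "q < t" using x4 by linarith
      then show ?thesis using 1 xD' inP[of q t t] by auto
    next
      case (2 q)
      then have "q < t" using x4 by linarith
      then have "q + 1 \<le> t" by simp
      then have "x + 1 < m" using 2 mt by linarith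
      then show ?thesis using 2 \<open>q < t\<close> nb1[of x m] inQ[of q t t] by (intro exI[of _ "x+1"]) auto
    next
      case (3 q)
      then have "q < t" using x4 by linarith
      then show ?thesis using 3 x nb0[of x m] inQ[of q t t] by (intro exI[of _ "x"]) auto
    next
      case (4 q)
      then have "q < t" using x4 by linarith
      show ?thesis
      proof (cases "q + 1 < t")
        case True
        then have "q + 2 \<le> t" by simp
        then have "x + 3 < m" using 4 mt by linarith
        then show ?thesis using 4 True nb3[of x m] inQ[of "q+1" t t] by (intro exI[of _ "x+3"]) auto
      next
        case False
        then have "x + 1 = 4*t" using 4 \<open>q < t\<close> by linarith
        moreover have "x + 1 < m" using x4 mt by linarith
        ultimately show ?thesis using nb1[of x m] by (intro exI[of _ "x+1"]) auto
      qed
    qed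
  qed
next
  fix y assume yV: "(2,y) \<in> knodel_vertices n" and yD: "(2,y) \<notin> insert (2,4*t) (D0 t t)"
  have y: "y < m" using yV V_iff[OF nm] by auto
  have y4: "y < 4*t" using y yD mt by auto
  have yD': "(2,y) \<notin> D0 t t" using yD by simp
  show "\<exists>j. nb m j y \<and> (1,j) \<in> insert (2,4*t) (D0 t t)"
  proof (cases y rule: split4)
    case (1 q)
    then have "q < t" using y4 by linarith
    then show ?thesis using 1 y nb0[of y m] inP[of q t t] by (intro exI[of _ "y"]) auto
  next
    case (2 q)
    then have "q < t" using y4 by linarith
    then show ?thesis using 2 y nb1[of "4*q" m] inP[of q t t] by (intro exI[of _ "4*q"]) auto
  next
    case (3 q)
    then have "q < t" using y4 by linarith
    then show ?thesis using 3 yD' inQ[of q t t] by auto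
  next
    case (4 q)
    then have "q < t" using y4 by linarith
    then show ?thesis using 4 y nb3[of "4*q" m] inP[of q t t] by (intro exI[of _ "4*q"]) auto
  qed
qed

lemma cons2:
  assumes nm: "n = 2*m" and mt: "m = 4*t+2" and t1: "t \<ge> 1"
  shows "dominating (knodel_vertices n - {(1,4*t-1)}) (knodel_edge 3 n) (D0 (t+1) t)"
proof (rule dom_intro[OF nm])
  have "(1,4*t-1) \<notin> D0 (t+1) t"
  proof
    assume a: "(1,4*t-1) \<in> D0 (t+1) t"
    have "\<exists>i<t+1. 4*t-1 = 4*i" by (rule iffD1[OF inP_iff a])
    then obtain i where "4*t - 1 = 4*i" by blast
    then show False using t1 by presburger
  qed
  moreover have "D0 (t+1) t \<subseteq> knodel_vertices n" using nm mt by (auto simp: D0_def knodel_vertices_def)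
  ultimately show "D0 (t+1) t \<subseteq> knodel_vertices n - {(1,4*t-1)}" by blast
  show "knodel_vertices n - {(1,4*t-1)} \<subseteq> knodel_vertices n" by auto
next
  fix x assume xV: "(1,x) \<in> knodel_vertices n - {(1,4*t-1)}" and xD: "(1,x) \<notin> D0 (t+1) t"
  have x: "x < m" and xu: "x \<noteq> 4*t-1" using xV V_iff[OF nm] by auto
  show "\<exists>k. nb m x k \<and> (2,k) \<in> D0 (t+1) t"
  proof (cases x rule: split4)
    case (1 q)
    then have "q < t+1" using x mt by linarith
    then show ?thesis using 1 xD inP[of q "t+1" t] by auto
  next
    case (2 q)
    then have "q < t+1" using x mt by linarith
    show ?thesis
    proof (cases "q < t")
      case True
      then have "q + 1 \<le> t" by simp
      then have "x + 1 < m" using 2 mt by linarith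
      then show ?thesis using 2 True nb1[of x m] inQ[of q t "t+1"] by (intro exI[of _ "x+1"]) auto
    next
      case False
      then have "x + 3 = m + 2" using 2 mt \<open>q < t+1\<close> by linarith
      then show ?thesis using t1 mt nb3w[of x m 2] inQ0[of t "t+1"] by (intro exI[of _ 2]) auto
    qed
  next
    case (3 q)
    then have "q < t" using x mt by linarith
    then show ?thesis using 3 x nb0[of x m] inQ[of q t "t+1"] by (intro exI[of _ "x"]) auto
  next
    case (4 q)
    then have "q < t" using x mt by linarith
    show ?thesis
    proof (cases "q + 1 < t")
      case True
      then have "q + 2 \<le> t" by simp
      then have "x + 3 < m" using 4 mt by linarith
      then show ?thesis using 4 True nb3[of x m] inQ[of "q+1" t "t+1"] by (intro exI[of _ "x+3"]) auto
    next
      case False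
      then have "x = 4*t-1" using 4 \<open>q < t\<close> by linarith
      then show ?thesis using xu by simp
    qed
  qed
next
  fix y assume yV: "(2,y) \<in> knodel_vertices n - {(1,4*t-1)}" and yD: "(2,y) \<notin> D0 (t+1) t"
  have y: "y < m" using yV V_iff[OF nm] by auto
  show "\<exists>j. nb m j y \<and> (1,j) \<in> D0 (t+1) t"
  proof (cases y rule: split4)
    case (1 q)
    then have "q < t+1" using y mt by linarith
    then show ?thesis using 1 y nb0[of y m] inP[of q "t+1" t] by (intro exI[of _ "y"]) auto
  next
    case (2 q)
    then have "q < t+1" using y mt by linarith
    then show ?thesis using 2 y nb1[of "4*q" m] inP[of q "t+1" t] by (intro exI[of _ "4*q"]) auto
  next
    case (3 q)
    then have "q < t" using y mt by linarith
    then show ?thesis using 3 yD inQ[of q t "t+1"] by auto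
  next
    case (4 q)
    then have "q < t+1" using y mt by linarith
    then show ?thesis using 4 y nb3[of "4*q" m] inP[of q "t+1" t] by (intro exI[of _ "4*q"]) auto
  qed
qed



lemma dn_le: "dominating V adj D \<Longrightarrow> domination_number V adj \<le> card D"
  unfolding domination_number_def by (rule Least_le) blast

lemma dn_att: "\<exists>D. dominating V adj D \<and> card D = domination_number V adj"
  unfolding domination_number_def
proof (rule LeastI_ex)
  have "dominating V adj V" by (simp add: dominating_def)
  then show "\<exists>k D. dominating V adj D \<and> card D = k" by blast
qed

lemma side_card:
  assumes nm: "n = 2*m" and i: "i = 1 \<or> i = 2"
  shows "card {x\<in>knodel_vertices n. fst x = i} = m"
proof -
  have "{x\<in>knodel_vertices n. fst x = i} = {i} \<times> {0..<m}" using nm i by (auto simp: knodel_vertices_def)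
  then show ?thesis by (simp add: card_cartesian_product)
qed

lemma side_card_u:
  assumes nm: "n = 2*m" and i: "i = 1 \<or> i = 2"
  shows "m - 1 \<le> card {x\<in>knodel_vertices n - {u}. fst x = i}"
proof -
  have "{x\<in>knodel_vertices n - {u}. fst x = i} = {x\<in>knodel_vertices n. fst x = i} - {u}" by auto
  then show ?thesis using side_card[OF nm i] by (simp add: card_Diff_singleton_if)
qed

lemma lowV:
  assumes nm: "n = 2*m" and m4: "m \<ge> 4"
  shows "2*m \<le> 4 * domination_number (knodel_vertices n) (knodel_edge 3 n)"
    and "m mod 4 = 2 \<Longrightarrow> m div 2 + 1 \<le> domination_number (knodel_vertices n) (knodel_edge 3 n)"
proof -
  obtain D where D: "dominating (knodel_vertices n) (knodel_edge 3 n) D"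
    "card D = domination_number (knodel_vertices n) (knodel_edge 3 n)" using dn_att by blast
  note L = lower[OF nm m4 order_refl D(1)]
  have a: "m \<le> card {x\<in>D. fst x = 2} + 3 * card {x\<in>D. fst x = 1}" using L(1) side_card[OF nm] by simp
  have b: "m \<le> card {x\<in>D. fst x = 1} + 3 * card {x\<in>D. fst x = 2}" using L(2) side_card[OF nm] by simp
  show "2*m \<le> 4 * domination_number (knodel_vertices n) (knodel_edge 3 n)"
    using a b L(3) D(2) by linarith
  assume "m mod 4 = 2"
  then obtain t where t: "m = 4*t+2" by (metis div_mult_mod_eq add.commute mult.commute)
  define p where "p = card {x\<in>D. fst x = 1}"
  define q where "q = card {x\<in>D. fst x = 2}"
  have c: "card D = p + q" using L(3) by (simp add: p_def q_def)
  have "2*t+2 \<le> p + q"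
  proof (rule ccontr)
    assume "\<not> 2*t+2 \<le> p + q"
    then have le: "p + q \<le> 2*t+1" by simp
    have "2*t+1 \<le> 2*p" using a le t by (simp add: p_def q_def) 
    then have "t+1 \<le> p" by presburger
    have "2*t+1 \<le> 2*q" using b le t by (simp add: p_def q_def)
    then have "t+1 \<le> q" by presburger
    then show False using \<open>t+1 \<le> p\<close> le by linarith
  qed
  then show "m div 2 + 1 \<le> domination_number (knodel_vertices n) (knodel_edge 3 n)"
    using t c D(2) by simp
qed


lemma side_card_u2:
  assumes nm: "n = 2*m" and i: "i = 1 \<or> i = 2" and u: "fst u \<noteq> i"
  shows "card {x\<in>knodel_vertices n - {u}. fst x = i} = m"
proof -
  have "{x\<in>knodel_vertices n - {u}. fst x = i} = {x\<in>knodel_vertices n. fst x = i}" using u by auto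
  then show ?thesis using side_card[OF nm i] by simp
qed

lemma lowVu:
  assumes nm: "n = 2*m" and m4: "m \<ge> 4"
  shows "2*m - 1 \<le> 4 * domination_number (knodel_vertices n - {u}) (knodel_edge 3 n)"
proof -
  obtain D where D: "dominating (knodel_vertices n - {u}) (knodel_edge 3 n) D"
    "card D = domination_number (knodel_vertices n - {u}) (knodel_edge 3 n)" using dn_att by blast
  note L = lower[OF nm m4 Diff_subset D(1)]
  define p where "p = card {x\<in>D. fst x = 1}"
  define q where "q = card {x\<in>D. fst x = 2}"
  have a: "m - 1 \<le> q + 3 * p" using L(1) side_card_u[OF nm, of 2 u] by (simp add: p_def q_def)
  have b: "m - 1 \<le> p + 3 * q" using L(2) side_card_u[OF nm, of 1 u] by (simp add: p_def q_def)
  have c: "card D = p + q" using L(3) by (simp add: p_def q_def)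
  have "m \<le> q + 3 * p \<or> m \<le> p + 3 * q"
  proof (cases "fst u = 1")
    case True
    then have "m \<le> q + 3 * p" using L(1) side_card_u2[OF nm, of 2 u] by (simp add: p_def q_def)
    then show ?thesis by simp
  next
    case False
    then have "m \<le> p + 3 * q" using L(2) side_card_u2[OF nm, of 1 u] by (simp add: p_def q_def)
    then show ?thesis by simp
  qed
  moreover have a': "m \<le> q + 3 * p + 1" using a by simp
  moreover have b': "m \<le> p + 3 * q + 1" using b by simp
  ultimately have "2*m \<le> 4 * card D + 1" using c by linarith
  then show ?thesis using D(2) by simp
qed

definition sh :: "nat \<Rightarrow> nat \<Rightarrow> nat \<times> nat \<Rightarrow> nat \<times> nat" where
  "sh m s v = (fst v, (snd v + s) mod m)"

lemma nb_sh: "nb m j k \<Longrightarrow> nb m ((j + s) mod m) ((k + s) mod m)"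
  unfolding nb_def by (auto simp: mod_simps ac_simps)

lemma sh_edge:
  assumes nm: "n = 2*m" and e: "knodel_edge 3 n x y"
  shows "knodel_edge 3 n (sh m s x) (sh m s y)"
proof -
  have xV: "x \<in> knodel_vertices n" and yV: "y \<in> knodel_vertices n" using e edge_iff[OF nm] by auto
  then have m0: "m > 0" using V_iff[OF nm] by auto
  have "sh m s x \<in> knodel_vertices n" "sh m s y \<in> knodel_vertices n"
    using xV yV m0 V_iff[OF nm] by (auto simp: sh_def)
  moreover have "(fst x = 1 \<and> fst y = 2 \<and> nb m (snd x) (snd y)) \<or> (fst y = 1 \<and> fst x = 2 \<and> nb m (snd y) (snd x))"
    using e edge_iff[OF nm] by auto
  ultimately show ?thesis using edge_iff[OF nm] nb_sh by (auto simp: sh_def)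
qed

lemma inv1: "j < m \<Longrightarrow> s \<le> m \<Longrightarrow> ((j + s) mod m + (m - s)) mod m = (j::nat)"
proof -
  assume a: "j < m" "s \<le> m"
  have "((j + s) mod m + (m - s)) mod m = (j + s + (m - s)) mod m" by (simp add: mod_add_left_eq)
  also have "j + s + (m - s) = j + m" using a by simp
  finally show ?thesis using a by simp
qed

lemma inv2: "j < m \<Longrightarrow> s \<le> m \<Longrightarrow> ((j + (m - s)) mod m + s) mod m = (j::nat)"
proof -
  assume a: "j < m" "s \<le> m"
  have "((j + (m - s)) mod m + s) mod m = (j + (m - s) + s) mod m" by (simp add: mod_add_left_eq)
  also have "j + (m - s) + s = j + m" using a by simp
  finally show ?thesis using a by simp
qed

lemma sh_dom:
  assumes nm: "n = 2*m" and s: "s \<le> m" and dom: "dominating (knodel_vertices n) (knodel_edge 3 n) D"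
  shows "dominating (knodel_vertices n) (knodel_edge 3 n) (sh m s ` D)"
  unfolding dominating_def
proof (intro conjI ballI)
  have DV: "D \<subseteq> knodel_vertices n" using dom by (simp add: dominating_def)
  show "sh m s ` D \<subseteq> knodel_vertices n"
  proof
    fix v assume "v \<in> sh m s ` D"
    then obtain d where d: "d \<in> D" "v = sh m s d" by blast
    then have "d \<in> knodel_vertices n" using DV by blast
    then show "v \<in> knodel_vertices n" using d V_iff[OF nm] by (auto simp: sh_def)
  qed
  fix v assume v: "v \<in> knodel_vertices n - sh m s ` D"
  define w where "w = sh m (m - s) v"
  have vV: "fst v = 1 \<or> fst v = 2" "snd v < m" using v V_iff[OF nm] by auto
  have wV: "w \<in> knodel_vertices n" using vV V_iff[OF nm] by (auto simp: w_def sh_def)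
  have vw: "sh m s w = v" using vV inv2[OF vV(2) s] by (cases v) (simp add: w_def sh_def)
  have "w \<notin> D" using v vw by blast
  then obtain d where d: "d \<in> D" "knodel_edge 3 n w d" using dom wV unfolding dominating_def by blast
  then have "knodel_edge 3 n v (sh m s d)" using sh_edge[OF nm d(2), of s] vw by simp
  then show "\<exists>d\<in>sh m s ` D. knodel_edge 3 n v d" using d by blast
qed

lemma avoid:
  assumes nm: "n = 2*m" and m4: "m \<ge> 4" and dom: "dominating (knodel_vertices n) (knodel_edge 3 n) D"
    and p1: "(1,1) \<notin> D" and p2: "(2,0) \<notin> D" and u: "u \<in> knodel_vertices n"
  shows "\<exists>D'. dominating (knodel_vertices n - {u}) (knodel_edge 3 n) D' \<and> card D' \<le> card D"
proof -
  have DV: "D \<subseteq> knodel_vertices n" using dom by (simp add: dominating_def)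
  obtain i j where uij: "u = (i,j)" by (cases u)
  have ij: "i = 1 \<or> i = 2" "j < m" using u uij V_iff[OF nm] by auto
  have "\<exists>s p. s \<le> m \<and> p \<notin> D \<and> sh m s p = u \<and> snd p < m"
  proof (cases "i = 1")
    case True
    define s where "s = (j + m - 1) mod m"
    have "s \<le> m" using m4 by (simp add: s_def)
    moreover have "sh m s (1,1) = u"
    proof -
      have "(1 + (j + m - 1) mod m) mod m = (1 + (j + m - 1)) mod m" by (simp add: mod_Suc_eq)
      also have "1 + (j + m - 1) = j + m" using m4 by simp
      finally show ?thesis using True uij ij by (simp add: sh_def s_def)
    qed
    ultimately show ?thesis using p1 m4 by (intro exI[of _ s] exI[of _ "(1,1)"]) auto
  next
    case False
    then have "i = 2" using ij by simp
    then have "sh m j (2,0) = u" using uij ij by (simp add: sh_def)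
    then show ?thesis using p2 m4 ij by (intro exI[of _ j] exI[of _ "(2,0)"]) auto
  qed
  then obtain s p where sp: "s \<le> m" "p \<notin> D" "sh m s p = u" "snd p < m" by blast
  have uD: "u \<notin> sh m s ` D"
  proof
    assume "u \<in> sh m s ` D"
    then obtain d where d: "d \<in> D" "sh m s d = u" by blast
    have "d \<in> knodel_vertices n" using d DV by blast
    then have "snd d < m" using V_iff[OF nm, of d] by simp
    then have "sh m (m - s) (sh m s d) = d" using inv1[OF _ sp(1)] by (cases d) (simp add: sh_def)
    moreover have "sh m (m - s) (sh m s p) = p" using inv1[OF sp(4) sp(1)] by (cases p) (simp add: sh_def)
    ultimately have "d = p" using d(2) sp(3) by simp
    then show False using d sp by simp
  qed
  have dom': "dominating (knodel_vertices n) (knodel_edge 3 n) (sh m s ` D)" by (rule sh_dom[OF nm sp(1) dom])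
  have "dominating (knodel_vertices n - {u}) (knodel_edge 3 n) (sh m s ` D)"
    unfolding dominating_def
  proof (intro conjI ballI)
    have "sh m s ` D \<subseteq> knodel_vertices n" using dom' by (simp add: dominating_def)
    then show "sh m s ` D \<subseteq> knodel_vertices n - {u}" using uD by blast
    fix v assume "v \<in> knodel_vertices n - {u} - sh m s ` D"
    then have "v \<in> knodel_vertices n - sh m s ` D" by simp
    then show "\<exists>d\<in>sh m s ` D. knodel_edge 3 n v d" using dom' unfolding dominating_def by simp
  qed
  moreover have "card (sh m s ` D) \<le> card D" by (rule card_image_le) (rule finite_subset[OF DV], simp add: knodel_vertices_def)
  ultimately show ?thesis by blast
qed



lemma arith1:
  assumes "(m::nat) mod 4 \<noteq> 2" "2*m - 1 \<le> 4*c"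
  shows "(m+1) div 2 \<le> c"
proof -
  have "m \<le> 2*c"
  proof (rule ccontr)
    assume "\<not> m \<le> 2*c"
    then have "2*c + 1 \<le> m" by simp
    then show False using assms(2) by linarith
  qed
  then have "(m+1) div 2 \<le> (2*c+1) div 2" by (intro div_le_mono) simp
  then show ?thesis by simp
qed

lemma arith2: "n = 2*(m::nat) \<Longrightarrow> (n mod 8 = 4) = (m mod 4 = 2)"
  by presburger


lemma notin11: "(1,1) \<notin> D0 a b"
proof
  assume h: "(1,1) \<in> D0 a b"
  have "\<exists>i<a. 1 = 4*i" by (rule iffD1[OF inP_iff h])
  then obtain i :: nat where "1 = 4*i" by blast
  then show False by (cases i) auto
qed
lemma notin20: "(2,0) \<notin> D0 a b"
proof
  assume h: "(2,0) \<in> D0 a b"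
  have "\<exists>i<b. 0 = 4*i+2" by (rule iffD1[OF inQ_iff h])
  then show False by auto
qed
lemma m42b: "m = 4*t+2 \<Longrightarrow> (m::nat) mod 4 = 2"
proof -
  assume "m = 4*t+2"
  then have "m mod 4 = (2 + t*4) mod 4" by (simp add: ac_simps)
  also have "\<dots> = 2" by (simp only: mod_mult_self1) simp
  finally show ?thesis .
qed
lemma ci: "card (insert (2,4*t) (D0 t t)) \<le> 2*t+1"
proof -
  have "card (insert (2,4*t) (D0 t t)) \<le> card (D0 t t) + 1" using fin_D0[of t t] by (simp add: card_insert_if)
  then show ?thesis using card_D0[of t t] by linarith
qed

lemma good_set:
  assumes nm: "n = 2*m" and m4: "m \<ge> 4" and r: "m mod 4 \<noteq> 2"
  shows "\<exists>D. dominating (knodel_vertices n) (knodel_edge 3 n) D \<and> (1,1) \<notin> D \<and> (2,0) \<notin> D \<and> card D \<le> (m+1) div 2"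
proof (cases m rule: split4)
  case (1 t)
  then have t1: "t \<ge> 1" using m4 by (cases t) auto
  have "card (D0 t t) \<le> (m+1) div 2" using card_D0[of t t] 1 by simp
  then show ?thesis using cons0[OF nm 1 t1] notin11[of t t] notin20[of t t] by (intro exI[of _ "D0 t t"] conjI)
next
  case (3 t)
  then have "m mod 4 = 2" by (rule m42b)
  then show ?thesis using r by simp
next
  case (2 t)
  then have t1: "t \<ge> 1" using m4 by (cases t) auto
  have a: "(1,1) \<notin> insert (2,4*t) (D0 t t)" using notin11[of t t] by simp
  have b: "(2,0) \<notin> insert (2,4*t) (D0 t t)" using t1 notin20[of t t] by simp
  have c: "card (insert (2,4*t) (D0 t t)) \<le> (m+1) div 2" using ci[of t] 2 by simp
  show ?thesis using cons1[OF nm 2 t1] a b c by (intro exI[of _ "insert (2,4*t) (D0 t t)"] conjI)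
next
  case (4 t)
  have "card (D0 (t+1) (t+1)) \<le> (m+1) div 2" using card_D0[of "t+1" "t+1"] 4 by simp
  then show ?thesis using cons3[OF nm 4] notin11[of "t+1" "t+1"] notin20[of "t+1" "t+1"]
    by (intro exI[of _ "D0 (t+1) (t+1)"] conjI)
qed

theorem corollary3p2:
  fixes n :: nat
  assumes "even n" and "n \<ge> 8"
  shows "gamma_stable (knodel_vertices n) (knodel_edge 3 n) \<longleftrightarrow> n mod 8 \<noteq> 4"
proof -
  obtain m where nm: "n = 2*m" using assms(1) by (auto elim: evenE)
  have m4: "m \<ge> 4" using assms(2) nm by simp
  show ?thesis
  proof
    assume st: "gamma_stable (knodel_vertices n) (knodel_edge 3 n)"
    show "n mod 8 \<noteq> 4"
    proof
      assume "n mod 8 = 4"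
      then have r: "m mod 4 = 2" using arith2[OF nm] by simp
      define t where "t = m div 4"
      have t: "m = 4*t+2" using div_mult_mod_eq[of m 4] r unfolding t_def by linarith
      then have t1: "t \<ge> 1" using m4 by (cases t) auto
      have "4*t - 1 < m" using t by linarith
      then have uV: "(1,4*t-1) \<in> knodel_vertices n" using V_iff[OF nm, of "(1,4*t-1)"] by simp
      have "domination_number (knodel_vertices n - {(1,4*t-1)}) (knodel_edge 3 n) \<le> card (D0 (t+1) t)"
        by (rule dn_le[OF cons2[OF nm t t1]])
      also have "\<dots> \<le> 2*t+1" using card_D0[of "t+1" t] by linarith
      finally have a: "domination_number (knodel_vertices n - {(1,4*t-1)}) (knodel_edge 3 n) \<le> 2*t+1" .
      have b: "2*t+2 \<le> domination_number (knodel_vertices n) (knodel_edge 3 n)"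
        using lowV(2)[OF nm m4 r] t by simp
      have "domination_number (knodel_vertices n - {(1,4*t-1)}) (knodel_edge 3 n) = domination_number (knodel_vertices n) (knodel_edge 3 n)"
        using st uV unfolding gamma_stable_def by blast
      then show False using a b by simp
    qed
  next
    assume "n mod 8 \<noteq> 4"
    then have r: "m mod 4 \<noteq> 2" using arith2[OF nm] by simp
    obtain D where D: "dominating (knodel_vertices n) (knodel_edge 3 n) D" "(1,1) \<notin> D" "(2,0) \<notin> D"
      "card D \<le> (m+1) div 2" using good_set[OF nm m4 r] by blast
    have g: "domination_number (knodel_vertices n) (knodel_edge 3 n) = (m+1) div 2"
    proof (rule antisym)
      show "domination_number (knodel_vertices n) (knodel_edge 3 n) \<le> (m+1) div 2"
        using dn_le[OF D(1)] D(4) by linarith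
      have "2*m - 1 \<le> 4 * domination_number (knodel_vertices n) (knodel_edge 3 n)"
        using lowV(1)[OF nm m4] by linarith
      then show "(m+1) div 2 \<le> domination_number (knodel_vertices n) (knodel_edge 3 n)"
        using arith1[OF r] by blast
    qed
    show "gamma_stable (knodel_vertices n) (knodel_edge 3 n)"
      unfolding gamma_stable_def
    proof
      fix u assume u: "u \<in> knodel_vertices n"
      obtain D' where D': "dominating (knodel_vertices n - {u}) (knodel_edge 3 n) D'" "card D' \<le> card D"
        using avoid[OF nm m4 D(1) D(2) D(3) u] by blast
      have "domination_number (knodel_vertices n - {u}) (knodel_edge 3 n) = (m+1) div 2"
      proof (rule antisym)
        show "domination_number (knodel_vertices n - {u}) (knodel_edge 3 n) \<le> (m+1) div 2"
          using dn_le[OF D'(1)] D'(2) D(4) by linarith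
        show "(m+1) div 2 \<le> domination_number (knodel_vertices n - {u}) (knodel_edge 3 n)"
          using arith1[OF r lowVu[OF nm m4, of u]] .
      qed
      then show "domination_number (knodel_vertices n - {u}) (knodel_edge 3 n) = domination_number (knodel_vertices n) (knodel_edge 3 n)"
        using g by simp
    qed
  qed
qed


end
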